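(* Let $f(1),f(2),\dots$ be a non-negative, non-decreasing sequence of real numbers with $f(1)=0$, and define $a(n):=n\sum_{i=1}^{n} f(i)/i^2$ for $n\ge1$. Then $a(n)\ge 0$ for all $n\ge1$, and for every $n\ge 2$, $$a(n)\le \frac{a(n-1)+a(n+1)}{2}.$$ *)

theory Defs
  imports Complex_Main
begin

definition seq_a :: "(nat \<Rightarrow> real) \<Rightarrow> nat \<Rightarrow> real" where
  "seq_a f n = real n * (\<Sum>i=1..n. f i / (real i)^2)"

end

theory Submission
  imports Defs
begin

theorem claim6p2:
  fixes f :: "nat \<Rightarrow> real"
  assumes nonneg: "\<And>n. n \<ge> 1 \<Longrightarrow> f n \<ge> 0"
    and mono: "\<And>m n. 1 \<le> m \<Longrightarrow> m \<le> n \<Longrightarrow> f m \<le> f n"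
    and f1: "f 1 = 0"
  shows "(\<forall>n\<ge>1. seq_a f n \<ge> 0) \<and>
         (\<forall>n\<ge>2. seq_a f n \<le> (seq_a f (n - 1) + seq_a f (n + 1)) / 2)"
proof (intro conjI allI impI)
  fix n :: nat assume "n \<ge> 1"
  show "seq_a f n \<ge> 0" unfolding seq_a_def
    by (intro mult_nonneg_nonneg sum_nonneg divide_nonneg_nonneg) (auto intro: nonneg)
next
  fix n :: nat assume n2: "n \<ge> 2"
  define S where "S = (\<Sum>i=1..n-1. f i / (real i)^2)"
  define x where "x = real n"
  have x2: "x \<ge> 2" using n2 by (simp add: x_def)
  have Sn: "(\<Sum>i=1..n. f i / (real i)^2) = S + f n / x^2"
  proof -
    obtain m where m: "n = Suc m" using n2 by (cases n) auto
    have "(\<Sum>i=1..Suc m. f i / (real i)^2) = (\<Sum>i=1..m. f i / (real i)^2) + f (Suc m) / (real (Suc m))^2"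
      using m n2 by simp
    then show ?thesis by (simp add: S_def x_def m)
  qed
  have Sn1: "(\<Sum>i=1..n+1. f i / (real i)^2) = S + f n / x^2 + f (n+1) / (x+1)^2"
    using Sn n2 by (simp add: x_def)
  have fn: "f n \<ge> 0" using nonneg n2 by simp
  have mn: "f n \<le> f (n+1)" using mono n2 by simp
  have an: "seq_a f n = x * (S + f n / x^2)" unfolding seq_a_def Sn x_def by simp
  have an1: "seq_a f (n+1) = (x+1) * (S + f n / x^2 + f (n+1) / (x+1)^2)"
    unfolding seq_a_def Sn1 x_def by simp
  have anm: "seq_a f (n-1) = (x-1) * S" using n2 by (simp add: seq_a_def S_def x_def of_nat_diff)
  have key: "f n * (x-1) / x^2 \<le> f (n+1) / (x+1)"
  proof -
    have "f n * (x-1) / x^2 \<le> f n / (x+1)"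
      using fn x2 by (simp add: field_simps mult_left_mono power2_eq_square)
    also have "\<dots> \<le> f (n+1) / (x+1)" using mn x2 by (simp add: divide_right_mono)
    finally show ?thesis .
  qed
  have "(x-1)*S + (x+1) * (S + f n / x^2 + f (n+1) / (x+1)^2) - 2 * (x * (S + f n / x^2))
      = f (n+1) / (x+1) - f n * (x-1) / x^2"
  proof -
    have "x \<noteq> 0" "x + 1 \<noteq> 0" using x2 by auto
    then show ?thesis by (simp add: divide_simps power2_eq_square) (simp add: algebra_simps)
  qed
  note calculation = this
  show "seq_a f n \<le> (seq_a f (n - 1) + seq_a f (n + 1)) / 2"
  proof -
    have "\<And>A B C D E::real. A + B - 2*C = D - E \<Longrightarrow> E \<le> D \<Longrightarrow> C \<le> (A + B)/2" by (simp add: field_simps)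
    from this[OF calculation key] show ?thesis unfolding an an1 anm .
  qed
qed

end
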